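(* Run multi-agent dual policy iteration (defined in the context) with $K\ge1$, arbitrary agent orderings, and the tie-breaking convention. Then the joint safety policies and the joint task policies are eventually constant, equal to some $\pi_h^*$ and $\pi^*$ respectively. Let $S_{\rm c}^*=S_{\rm c}^{\pi_h^*}$, and assume $S_{\rm c}^*\neq\varnothing$. Then: (a) $\pi_h^*$ is a Nash equilibrium for the safety value function: $V_h^{(\pi_{h,i},\pi^*_{h,-i})}(x)\le V_h^{\pi_h^*}(x)$ for all $i$, all individual policies $\pi_{h,i}$, and all $x\in\mathcal X$; (b) $\pi^*(x)=\pi_h^*(x)$ for all $x\notin S_{\rm c}^*$, and $V_h^{\pi_h^*}(f(x,\pi^*(x)))\ge0$ for all $x\in S_{\rm c}^*$; (c) (generalized Nash equilibrium in the induced game) for every $i\in\mathcal N$ and every individual policy $\pi_i:\mathcal X\to\mathcal U_i$ such that $V_h^{\pi_h^*}\big(f(y,(\pi_i(y),\pi^*_{-i}(y)))\big)\ge0$ for all $y\in S_{\rm c}^*$, one has $V^{(\pi_i,\pi^*_{-i})}(x)\le V^{\pi^*}(x)$ for all $x\in S_{\rm c}^*$; (d) (generalized Nash equilibrium for the two-fold problem) for every initial distribution $d$ on $\mathcal X$, every $i\in\mathcal N$, and every individual policy $\pi_i$ satisfying the condition in (c), $J(\pi_i,\pi^*_{-i})\le J(\pi^* )$. Here $$J(\pi)=\mathbb E_{x_0\sim d}\big[V^{\pi}(x_0)\mathbb 1_{S_{\rm c}^*}(x_0)+V_h^{\pi}(x_0)\mathbb 1_{\mathcal X\setminus S_{\rm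 c}^*}(x_0)\big],$$ and $\pi^*$ itself satisfies the constraint $V_h^{\pi_h^*}(f(x,\pi^*(x)))\ge0$ for all $x\in S_{\rm c}^*$.
   Context: Setting. Let $\mathcal N=\{1,\dots,n\}$ be a finite set of agents, $\mathcal X$ a finite state space, $\mathcal U_i$ a finite action set for agent $i$, $\mathcal U=\prod_{i=1}^n\mathcal U_i$ the joint action space, $f:\mathcal X\times\mathcal U\to\mathcal X$ the deterministic dynamics, $r:\mathcal X\times\mathcal U\to\mathbb R$ a reward, $h:\mathcal X\to\mathbb R$ a constraint function, and $\gamma,\gamma_h\in(0,1)$ discount factors. An individual policy of agent $i$ is a map $\pi_i:\mathcal X\to\mathcal U_i$. A joint policy is $\pi=(\pi_1,\dots,\pi_n)$, with $\pi(x)=(\pi_1(x),\dots,\pi_n(x))$. For a joint action $u$ and an agent $i$, $(u_i',u_{-i})$ denotes $u$ with its $i$-th component replaced by $u_i'$. The notation $(\pi_i',\pi_{-i})$ is used in the same way for policies. Safety value function. For a joint policy $\pi$, set $V_h^{\pi}(x)=\min_{t\in\mathbb N}\gamma_h^{t+1}h(x_t)$, where $x_0=x$ and $x_{t+1}=f(x_t,\pi(x_t))$. Value function. Along the same trajectory, set $V^{\pi}(x)=\sum_{t\ge0}\gamma^t r(x_t,\pi(x_t))$. Controlled invariant set. $S_{\rm c}^{\pi}=\{x: V_h^{\pi}(x)\ge0\}$. Invariant action set. For a joint policy $\pi_h$, a state $x$, and actions $u_{-i}$ of the agents other than $i$, set $\mathcal U_i^{\pi_h}(x,u_{-i})=\{u_i\in\mathcal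 U_i: V_h^{\pi_h}(f(x,(u_i,u_{-i})))\ge0\}$. Safety update step. Given the current joint safety policy $\pi_h$ and an ordering $i_1,\dots,i_n$ of $\mathcal N$: for each $x$ and $j=1,\dots,n$ in turn, replace $\pi_{h,i_j}(x)$ by an element of $\arg\max_{v\in\mathcal U_{i_j}}V_h^{\pi_h^{\rm old}}(f(x,w))$. Here $V_h^{\pi_h^{\rm old}}$ is computed for the policy before this step, and $w$ has component $i_j$ equal to $v$, components of earlier agents equal to their already-updated actions, and components of later agents equal to their old actions. Multi-agent dual policy iteration. Start from an initial joint safety policy $\pi_h$, an arbitrary initial joint task policy $\pi$, and $S_{\rm c}=\varnothing$. Each outer iteration consists of: (1) apply the safety update step $K$ times to $\pi_h$; (2) compute $V^{\pi}$ for the current task policy $\pi$; (3) for every $x\in\mathcal X\setminus S_{\rm c}$, set $\pi(x)\leftarrow\pi_h(x)$; (4) set $S_{\rm c}^{\rm new}=S_{\rm c}^{\pi_h}$; (5) choose an ordering $i_1,\dots,i_n$. For each $x\in S_{\rm c}^{\rm new}$ and $j=1,\dots,n$ in turn, set $$\pi^{\rm new}_{i_j}(x)\in\arg\max_{v\in\mathcal U_{i_j}^{\pi_h}(x,w^{(j)}_{-i_j})}\Big\{r\big(x,(v,w^{(j)}_{-i_j})\big)+\gamma V^{\pi}\big(f(x,(v,w^{(j)}_{-i_j}))\big)\Big\},$$ where $w^{(j)}_{-i_j}$ gives agents $i_l$ with $l<j$ their new actions $\pi^{\rm new}_{i_l}(x)$ and agents $i_l$ with $l>j$ their actions under $\pi$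 after step (3). For $x\notin S_{\rm c}^{\rm new}$, $\pi^{\rm new}(x)$ is $\pi(x)$ after step (3). Then set $\pi\leftarrow\pi^{\rm new}$; (6) set $S_{\rm c}\leftarrow S_{\rm c}^{\rm new}$. Tie-breaking convention. In every argmax, if the agent's current action is a maximizer, it is selected. Otherwise, a maximizer is selected by a fixed deterministic rule. *)

theory Defs
  imports "HOL-Probability.Probability"
begin

text \<open>States 'x, agents 'i (both finite types), actions 'a; agent i's action set is U i.\<close>

definition traj :: "('x \<Rightarrow> ('i \<Rightarrow> 'a) \<Rightarrow> 'x) \<Rightarrow> ('x \<Rightarrow> 'i \<Rightarrow> 'a) \<Rightarrow> 'x \<Rightarrow> nat \<Rightarrow> 'x" where
  "traj f \<pi> x t = ((\<lambda>y. f y (\<pi> y)) ^^ t) x"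

text \<open>Safety value: min over t of gamma_h^(t+1) h(x_t) (infimum; it need not be attained).\<close>
definition safety_value :: "real \<Rightarrow> ('x \<Rightarrow> real) \<Rightarrow> ('x \<Rightarrow> ('i \<Rightarrow> 'a) \<Rightarrow> 'x)
    \<Rightarrow> ('x \<Rightarrow> 'i \<Rightarrow> 'a) \<Rightarrow> 'x \<Rightarrow> real" where
  "safety_value \<gamma>h h f \<pi> x = (INF t. \<gamma>h ^ Suc t * h (traj f \<pi> x t))"

definition value_fn :: "real \<Rightarrow> ('x \<Rightarrow> ('i \<Rightarrow> 'a) \<Rightarrow> real) \<Rightarrow> ('x \<Rightarrow> ('i \<Rightarrow> 'a) \<Rightarrow> 'x)
    \<Rightarrow> ('x \<Rightarrow> 'i \<Rightarrow> 'a) \<Rightarrow> 'x \<Rightarrow> real" where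
  "value_fn \<gamma> r f \<pi> x = (\<Sum>t. \<gamma> ^ t * r (traj f \<pi> x t) (\<pi> (traj f \<pi> x t)))"

definition inv_set :: "real \<Rightarrow> ('x \<Rightarrow> real) \<Rightarrow> ('x \<Rightarrow> ('i \<Rightarrow> 'a) \<Rightarrow> 'x)
    \<Rightarrow> ('x \<Rightarrow> 'i \<Rightarrow> 'a) \<Rightarrow> 'x set" where
  "inv_set \<gamma>h h f \<pi> = {x. safety_value \<gamma>h h f \<pi> x \<ge> 0}"

definition deviate :: "('x \<Rightarrow> 'i \<Rightarrow> 'a) \<Rightarrow> 'i \<Rightarrow> ('x \<Rightarrow> 'a) \<Rightarrow> ('x \<Rightarrow> 'i \<Rightarrow> 'a)" where
  "deviate \<pi> i \<pi>i = (\<lambda>x. (\<pi> x)(i := \<pi>i x))"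

definition is_tb_max :: "'a set \<Rightarrow> ('a \<Rightarrow> real) \<Rightarrow> 'a \<Rightarrow> 'a \<Rightarrow> bool" where
  "is_tb_max A \<phi> cur v \<longleftrightarrow> v \<in> A \<and> (\<forall>v'\<in>A. \<phi> v' \<le> \<phi> v)
     \<and> ((cur \<in> A \<and> (\<forall>v'\<in>A. \<phi> v' \<le> \<phi> cur)) \<longrightarrow> v = cur)"

text \<open>Sequential (agent-by-agent) update of a joint action w along an ordering.
  C i w is the admissible set of agent i given the others' actions in w; g is the objective.\<close>
fun seq_update :: "('i \<Rightarrow> ('i \<Rightarrow> 'a) \<Rightarrow> 'a set) \<Rightarrow> (('i \<Rightarrow> 'a) \<Rightarrow> real) \<Rightarrow> 'i list
    \<Rightarrow> ('i \<Rightarrow> 'a) \<Rightarrow> ('i \<Rightarrow> 'a) \<Rightarrow> bool" where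
  "seq_update C g [] w w' \<longleftrightarrow> w' = w"
| "seq_update C g (i # is) w w' \<longleftrightarrow>
     (\<exists>v. is_tb_max (C i w) (\<lambda>v. g (w(i := v))) (w i) v \<and> seq_update C g is (w(i := v)) w')"

definition is_ordering :: "'i list \<Rightarrow> bool" where
  "is_ordering os \<longleftrightarrow> distinct os \<and> set os = UNIV"

definition safety_step :: "('i \<Rightarrow> 'a set) \<Rightarrow> real \<Rightarrow> ('x \<Rightarrow> real) \<Rightarrow> ('x \<Rightarrow> ('i \<Rightarrow> 'a) \<Rightarrow> 'x)
    \<Rightarrow> 'i list \<Rightarrow> ('x \<Rightarrow> 'i \<Rightarrow> 'a) \<Rightarrow> ('x \<Rightarrow> 'i \<Rightarrow> 'a) \<Rightarrow> bool" where
  "safety_step U \<gamma>h h f os p q \<longleftrightarrow>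
     (\<forall>x. seq_update (\<lambda>i w. U i) (\<lambda>u. safety_value \<gamma>h h f p (f x u)) os (p x) (q x))"

text \<open>Step (5): ph is the current safety policy, pold the task policy of step (2)
  (used for V^pi), pmid the task policy after step (3), q the new task policy.\<close>
definition task_update :: "('i \<Rightarrow> 'a set) \<Rightarrow> real \<Rightarrow> real \<Rightarrow> ('x \<Rightarrow> real)
    \<Rightarrow> ('x \<Rightarrow> ('i \<Rightarrow> 'a) \<Rightarrow> real) \<Rightarrow> ('x \<Rightarrow> ('i \<Rightarrow> 'a) \<Rightarrow> 'x)
    \<Rightarrow> ('x \<Rightarrow> 'i \<Rightarrow> 'a) \<Rightarrow> ('x \<Rightarrow> 'i \<Rightarrow> 'a) \<Rightarrow> ('x \<Rightarrow> 'i \<Rightarrow> 'a) \<Rightarrow> 'i list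
    \<Rightarrow> ('x \<Rightarrow> 'i \<Rightarrow> 'a) \<Rightarrow> bool" where
  "task_update U \<gamma> \<gamma>h h r f ph pold pmid os q \<longleftrightarrow>
     (\<forall>x. if x \<in> inv_set \<gamma>h h f ph
          then seq_update (\<lambda>i w. {v \<in> U i. safety_value \<gamma>h h f ph (f x (w(i := v))) \<ge> 0})
                 (\<lambda>u. r x u + \<gamma> * value_fn \<gamma> r f pold (f x u)) os (pmid x) (q x)
          else q x = pmid x)"

text \<open>A run of multi-agent dual policy iteration.  ph k, pt k, Sc k: safety policy, task policy
  and set S_c at the start of outer iteration k; phs k j: safety policy after j of the K
  safety update steps of iteration k; ordh k j, ordt k: the orderings used.\<close>
definition dpi_run :: "('i \<Rightarrow> 'a set) \<Rightarrow> real \<Rightarrow> real \<Rightarrow> ('x \<Rightarrow> real)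
    \<Rightarrow> ('x \<Rightarrow> ('i \<Rightarrow> 'a) \<Rightarrow> real) \<Rightarrow> ('x \<Rightarrow> ('i \<Rightarrow> 'a) \<Rightarrow> 'x) \<Rightarrow> nat
    \<Rightarrow> (nat \<Rightarrow> 'x \<Rightarrow> 'i \<Rightarrow> 'a) \<Rightarrow> (nat \<Rightarrow> nat \<Rightarrow> 'x \<Rightarrow> 'i \<Rightarrow> 'a) \<Rightarrow> (nat \<Rightarrow> 'x \<Rightarrow> 'i \<Rightarrow> 'a)
    \<Rightarrow> (nat \<Rightarrow> 'x set) \<Rightarrow> (nat \<Rightarrow> nat \<Rightarrow> 'i list) \<Rightarrow> (nat \<Rightarrow> 'i list) \<Rightarrow> bool" where
  "dpi_run U \<gamma> \<gamma>h h r f K ph phs pt Sc ordh ordt \<longleftrightarrow>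
     Sc 0 = {} \<and> (\<forall>x i. ph 0 x i \<in> U i) \<and> (\<forall>x i. pt 0 x i \<in> U i) \<and>
     (\<forall>k. phs k 0 = ph k \<and> ph (Suc k) = phs k K
        \<and> (\<forall>j<K. is_ordering (ordh k j) \<and> safety_step U \<gamma>h h f (ordh k j) (phs k j) (phs k (Suc j)))
        \<and> is_ordering (ordt k)
        \<and> task_update U \<gamma> \<gamma>h h r f (ph (Suc k)) (pt k)
             (\<lambda>x. if x \<in> Sc k then pt k x else ph (Suc k) x) (ordt k) (pt (Suc k))
        \<and> Sc (Suc k) = inv_set \<gamma>h h f (ph (Suc k)))"

definition twofold_J :: "real \<Rightarrow> real \<Rightarrow> ('x \<Rightarrow> real) \<Rightarrow> ('x \<Rightarrow> ('i \<Rightarrow> 'a) \<Rightarrow> real)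
    \<Rightarrow> ('x \<Rightarrow> ('i \<Rightarrow> 'a) \<Rightarrow> 'x) \<Rightarrow> 'x set \<Rightarrow> 'x pmf \<Rightarrow> ('x \<Rightarrow> 'i \<Rightarrow> 'a) \<Rightarrow> real" where
  "twofold_J \<gamma> \<gamma>h h r f S d \<pi> =
     measure_pmf.expectation d (\<lambda>x0. value_fn \<gamma> r f \<pi> x0 * indicator S x0
                                    + safety_value \<gamma>h h f \<pi> x0 * indicator (- S) x0)"

end

theory Submission
  imports Defs
begin

lemma seq_update_valid:
  assumes "seq_update C g os w w'" "\<forall>i w. C i w \<subseteq> U i" "\<forall>i. w i \<in> U i"
  shows "\<forall>i. w' i \<in> U i"
  using assms
proof (induction os arbitrary: w)
  case Nil thus ?case by simp
next
  case (Cons j os)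
  from Cons.prems(1) obtain v where v: "is_tb_max (C j w) (\<lambda>v. g (w(j := v))) (w j) v"
    and rest: "seq_update C g os (w(j:=v)) w'" by auto
  have "v \<in> U j" using v Cons.prems(2) unfolding is_tb_max_def by blast
  hence "\<forall>i. (w(j:=v)) i \<in> U i" using Cons.prems(3) by simp
  thus ?case using Cons.IH rest Cons.prems(2) by blast
qed

lemma seq_update_last:
  assumes "seq_update C g os w w'" "os \<noteq> []" "\<forall>i w v. v \<in> C i w \<longrightarrow> P (w(i:=v))"
  shows "P w'"
  using assms
proof (induction os arbitrary: w)
  case Nil thus ?case by simp
next
  case (Cons j os)
  from Cons.prems(1) obtain v where v: "is_tb_max (C j w) (\<lambda>v. g (w(j := v))) (w j) v"
    and rest: "seq_update C g os (w(j:=v)) w'" by auto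
  show ?case
  proof (cases "os = []")
    case True
    then have "w' = w(j:=v)" using rest by simp
    moreover have "v \<in> C j w" using v unfolding is_tb_max_def by blast
    ultimately show ?thesis using Cons.prems(3) by blast
  next
    case False
    then show ?thesis using Cons.IH rest Cons.prems(3) by blast
  qed
qed

lemma seq_update_mono:
  assumes "seq_update C g os w w'" "Inv w"
    "\<forall>i w. Inv w \<longrightarrow> w i \<in> C i w" "\<forall>i w v. Inv w \<longrightarrow> v \<in> C i w \<longrightarrow> Inv (w(i:=v))"
  shows "Inv w' \<and> g w \<le> g w' \<and> (w' \<noteq> w \<longrightarrow> g w < g w')"
  using assms
proof (induction os arbitrary: w)
  case Nil thus ?case by simp
next
  case (Cons j os)
  from Cons.prems(1) obtain v where v: "is_tb_max (C j w) (\<lambda>v. g (w(j := v))) (w j) v"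
    and rest: "seq_update C g os (w(j:=v)) w'" by auto
  have vC: "v \<in> C j w" and vmax: "\<forall>v'\<in>C j w. g (w(j:=v')) \<le> g (w(j:=v))"
    and tb: "(w j \<in> C j w \<and> (\<forall>v'\<in>C j w. g (w(j:=v')) \<le> g w)) \<longrightarrow> v = w j"
    using v unfolding is_tb_max_def by auto
  have cur: "w j \<in> C j w" using Cons.prems(2,3) by blast
  have inv1: "Inv (w(j:=v))" using Cons.prems(2,4) vC by blast
  have IH: "Inv w' \<and> g (w(j:=v)) \<le> g w' \<and> (w' \<noteq> w(j:=v) \<longrightarrow> g (w(j:=v)) < g w')"
    using Cons.IH[OF rest inv1 Cons.prems(3,4)] .
  have le1: "g w \<le> g (w(j:=v))" using vmax cur by (metis fun_upd_triv)
  have "w' \<noteq> w \<longrightarrow> g w < g w'"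
  proof
    assume ne: "w' \<noteq> w"
    show "g w < g w'"
    proof (cases "v = w j")
      case True
      then have "w(j:=v) = w" by simp
      then show ?thesis using IH ne by simp
    next
      case False
      then obtain v' where "v' \<in> C j w" "g w < g (w(j:=v'))" using tb cur by force
      then show ?thesis using vmax IH by fastforce
    qed
  qed
  then show ?case using IH le1 by auto
qed

lemma seq_update_fix:
  assumes "seq_update C g os w w" "Inv w"
    "\<forall>i w. Inv w \<longrightarrow> w i \<in> C i w" "\<forall>i w v. Inv w \<longrightarrow> v \<in> C i w \<longrightarrow> Inv (w(i:=v))"
  shows "\<forall>i\<in>set os. \<forall>v\<in>C i w. g (w(i:=v)) \<le> g w"
  using assms(1)
proof (induction os)
  case Nil thus ?case by simp
next
  case (Cons j os)
  from Cons.prems(1) obtain v where v: "is_tb_max (C j w) (\<lambda>v. g (w(j := v))) (w j) v"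
    and rest: "seq_update C g os (w(j:=v)) w" by auto
  have vC: "v \<in> C j w" and vmax: "\<forall>v'\<in>C j w. g (w(j:=v')) \<le> g (w(j:=v))"
    and tb: "(w j \<in> C j w \<and> (\<forall>v'\<in>C j w. g (w(j:=v')) \<le> g w)) \<longrightarrow> v = w j"
    using v unfolding is_tb_max_def by auto
  have cur: "w j \<in> C j w" using assms(2,3) by blast
  have inv1: "Inv (w(j:=v))" using assms(2,4) vC by blast
  have "g (w(j:=v)) \<le> g w" using seq_update_mono[OF rest inv1 assms(3,4)] by blast
  hence mx: "\<forall>v'\<in>C j w. g (w(j:=v')) \<le> g w" using vmax by fastforce
  hence "v = w j" using tb cur by blast
  hence "w(j:=v) = w" by simp
  hence "seq_update C g os w w" using rest by simp
  hence "\<forall>i\<in>set os. \<forall>v\<in>C i w. g (w(i:=v)) \<le> g w" by (rule Cons.IH)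
  then show ?case using mx by (metis set_ConsD)
qed

lemma traj_0[simp]: "traj f p x 0 = x" by (simp add: traj_def)
lemma traj_Suc: "traj f p x (Suc t) = traj f p (f x (p x)) t"
  by (simp add: traj_def funpow_Suc_right del: funpow.simps)
lemma traj_Suc': "traj f p x (Suc t) = f (traj f p x t) (p (traj f p x t))"
  by (simp add: traj_def)

lemma finite_pol:
  assumes "\<And>i. finite (U i)"
  shows "finite {p :: 'x::finite \<Rightarrow> 'i::finite \<Rightarrow> 'a. \<forall>x i. p x i \<in> U i}"
proof -
  have "{p :: 'x \<Rightarrow> 'i \<Rightarrow> 'a. \<forall>x i. p x i \<in> U i} = Pi\<^sub>E UNIV (\<lambda>_. Pi\<^sub>E UNIV U)"
    by (auto simp: PiE_UNIV_domain Pi_def)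
  moreover have "finite (Pi\<^sub>E UNIV (\<lambda>_::'x. Pi\<^sub>E UNIV U))"
    by (intro finite_PiE) (auto intro: finite_PiE assms)
  ultimately show ?thesis by simp
qed

lemma eventually_const_mono:
  fixes a :: "nat \<Rightarrow> real"
  assumes "finite (a ` {n0..})" "\<forall>n\<ge>n0. a n \<le> a (Suc n)"
  shows "\<exists>n1\<ge>n0. \<forall>n\<ge>n1. a n = a n1"
proof -
  have ne: "a ` {n0..} \<noteq> {}" by auto
  define M where "M = Max (a ` {n0..})"
  have "M \<in> a ` {n0..}" using Max_in[OF assms(1) ne] M_def by simp
  then obtain n1 where n1: "n1 \<ge> n0" "a n1 = M" by auto
  have mono: "a n1 \<le> a n" if "n1 \<le> n" for n
    using that
  proof (induction n rule: dec_induct)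
    case base thus ?case by simp
  next
    case (step m) thus ?case using assms(2) n1 by (meson dual_order.trans le_trans)
  qed
  have "a n \<le> M" if "n \<ge> n0" for n using Max_ge[OF assms(1)] that M_def by auto
  then show ?thesis using n1 mono by (intro exI[of _ n1]) (auto intro: antisym)
qed



context
  fixes \<gamma>h :: real and h :: "'x::finite \<Rightarrow> real" and f :: "'x \<Rightarrow> ('i \<Rightarrow> 'a) \<Rightarrow> 'x"
  assumes \<gamma>h: "0 < \<gamma>h" "\<gamma>h < 1"
begin

lemma h_bound: "\<bar>h y\<bar> \<le> Max (range (\<lambda>x. \<bar>h x\<bar>))"
  by (rule Max_ge) auto

lemma term_bound: "\<bar>\<gamma>h ^ Suc t * h y\<bar> \<le> Max (range (\<lambda>x. \<bar>h x\<bar>))"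
proof -
  have "\<bar>\<gamma>h ^ Suc t * h y\<bar> = \<gamma>h ^ Suc t * \<bar>h y\<bar>" using \<gamma>h by (simp add: abs_mult)
  also have "\<dots> \<le> 1 * \<bar>h y\<bar>"
  proof (rule mult_right_mono)
    show "\<gamma>h ^ Suc t \<le> 1" using \<gamma>h by (intro power_le_one) auto
  qed simp
  finally have "\<bar>\<gamma>h ^ Suc t * h y\<bar> \<le> \<bar>h y\<bar>" by simp
  thus ?thesis using h_bound[of y] by linarith
qed

lemma term_lb: "- Max (range (\<lambda>x. \<bar>h x\<bar>)) \<le> \<gamma>h ^ Suc t * h y"
  using abs_le_D2[OF term_bound[of t y]] by linarith

lemma sv_bdd: "bdd_below (range (\<lambda>t. \<gamma>h ^ Suc t * h (traj f p x t)))"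
  using term_lb by (intro bdd_belowI[where m="- Max (range (\<lambda>x. \<bar>h x\<bar>))"]) auto

lemma sv_le: "safety_value \<gamma>h h f p x \<le> \<gamma>h ^ Suc t * h (traj f p x t)"
  unfolding safety_value_def by (rule cINF_lower[OF sv_bdd]) simp

lemma sv_ge: "(\<And>t. c \<le> \<gamma>h ^ Suc t * h (traj f p x t)) \<Longrightarrow> c \<le> safety_value \<gamma>h h f p x"
  unfolding safety_value_def by (rule cINF_greatest) auto

lemma sv_lb: "- Max (range (\<lambda>x. \<bar>h x\<bar>)) \<le> safety_value \<gamma>h h f p x"
  using term_lb by (intro sv_ge) auto

lemma sv_nonpos: "safety_value \<gamma>h h f p x \<le> 0"
proof -
  define B where "B = Max (range (\<lambda>x. \<bar>h x\<bar>))"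
  have lim: "(\<lambda>t. \<gamma>h ^ Suc t * B) \<longlonglongrightarrow> 0"
  proof -
    have "(\<lambda>t. \<gamma>h ^ t) \<longlonglongrightarrow> 0" using \<gamma>h by (intro LIMSEQ_power_zero) simp
    hence "(\<lambda>t. \<gamma>h ^ Suc t) \<longlonglongrightarrow> 0" by (rule LIMSEQ_Suc)
    hence "(\<lambda>t. \<gamma>h ^ Suc t * B) \<longlonglongrightarrow> 0 * B" by (intro tendsto_mult) auto
    thus ?thesis by simp
  qed
  have "safety_value \<gamma>h h f p x \<le> \<gamma>h ^ Suc t * B" for t
  proof -
    have "\<gamma>h ^ Suc t * h (traj f p x t) \<le> \<gamma>h ^ Suc t * B"
      using \<gamma>h abs_le_D1[OF h_bound[of "traj f p x t"]] unfolding B_def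
      by (intro mult_left_mono) auto
    thus ?thesis using sv_le[of p x t] by linarith
  qed
  thus ?thesis using LIMSEQ_le_const[OF lim] by blast
qed

lemma sv_bellman:
  "safety_value \<gamma>h h f p x = min (\<gamma>h * h x) (\<gamma>h * safety_value \<gamma>h h f p (f x (p x)))"
proof (rule antisym)
  let ?V = "safety_value \<gamma>h h f p"
  let ?x1 = "f x (p x)"
  have a: "?V x \<le> \<gamma>h * h x" using sv_le[of p x 0] by simp
  have "?V x / \<gamma>h \<le> ?V ?x1"
  proof (rule sv_ge)
    fix t
    have "?V x \<le> \<gamma>h ^ Suc (Suc t) * h (traj f p x (Suc t))" by (rule sv_le)
    also have "\<dots> = \<gamma>h * (\<gamma>h ^ Suc t * h (traj f p ?x1 t))" by (simp add: traj_Suc)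
    finally show "?V x / \<gamma>h \<le> \<gamma>h ^ Suc t * h (traj f p ?x1 t)" using \<gamma>h
      by (simp add: divide_le_eq mult.commute)
  qed
  hence b: "?V x \<le> \<gamma>h * ?V ?x1" using \<gamma>h by (simp add: divide_le_eq mult.commute)
  show "?V x \<le> min (\<gamma>h * h x) (\<gamma>h * ?V ?x1)" using a b by simp
  show "min (\<gamma>h * h x) (\<gamma>h * ?V ?x1) \<le> ?V x"
  proof (rule sv_ge)
    fix t show "min (\<gamma>h * h x) (\<gamma>h * ?V ?x1) \<le> \<gamma>h ^ Suc t * h (traj f p x t)"
    proof (cases t)
      case 0 thus ?thesis by simp
    next
      case (Suc s)
      have "?V ?x1 \<le> \<gamma>h ^ Suc s * h (traj f p ?x1 s)" by (rule sv_le)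
      hence "\<gamma>h * ?V ?x1 \<le> \<gamma>h * (\<gamma>h ^ Suc s * h (traj f p ?x1 s))" using \<gamma>h by simp
      thus ?thesis using Suc by (simp add: traj_Suc)
    qed
  qed
qed

lemma L_lower:
  assumes "\<forall>y. W y \<le> \<gamma>h * h y \<and> W y \<le> \<gamma>h * W (f y (p y))"
  shows "W x \<le> safety_value \<gamma>h h f p x"
proof -
  have I: "\<forall>x. W x \<le> \<gamma>h ^ t * W (traj f p x t)" for t
  proof (induction t)
    case 0 thus ?case by simp
  next
    case (Suc t)
    show ?case
    proof
      fix x
      have "W (traj f p x t) \<le> \<gamma>h * W (traj f p x (Suc t))"
        using assms by (simp add: traj_Suc')
      hence "\<gamma>h ^ t * W (traj f p x t) \<le> \<gamma>h ^ t * (\<gamma>h * W (traj f p x (Suc t)))"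
        using \<gamma>h by (intro mult_left_mono) auto
      moreover have "\<gamma>h ^ t * (\<gamma>h * W (traj f p x (Suc t))) = \<gamma>h ^ Suc t * W (traj f p x (Suc t))"
        by (simp add: mult_ac)
      ultimately show "W x \<le> \<gamma>h ^ Suc t * W (traj f p x (Suc t))" using Suc.IH by (metis order_trans)
    qed
  qed
  show ?thesis
  proof (rule sv_ge)
    fix t
    have "\<gamma>h ^ t * W (traj f p x t) \<le> \<gamma>h ^ t * (\<gamma>h * h (traj f p x t))"
      using assms \<gamma>h by (intro mult_left_mono) auto
    moreover have "\<gamma>h ^ t * (\<gamma>h * h (traj f p x t)) = \<gamma>h ^ Suc t * h (traj f p x t)"
      by (simp add: mult_ac)
    ultimately show "W x \<le> \<gamma>h ^ Suc t * h (traj f p x t)" using I by (metis order_trans)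
  qed
qed

lemma L_upper:
  assumes "\<forall>y. min (\<gamma>h * h y) (\<gamma>h * W (f y (p y))) \<le> W y" "\<forall>y. - c \<le> W y"
  shows "safety_value \<gamma>h h f p x \<le> W x"
proof -
  let ?V = "safety_value \<gamma>h h f p"
  have P: "\<forall>x. min (?V x) (\<gamma>h ^ n * W (traj f p x n)) \<le> W x" for n
  proof (induction n)
    case 0 thus ?case by simp
  next
    case (Suc n)
    show ?case
    proof
      fix x
      let ?x1 = "f x (p x)"
      have ih: "min (?V ?x1) (\<gamma>h ^ n * W (traj f p ?x1 n)) \<le> W ?x1" using Suc.IH by blast
      have bel: "?V x = min (\<gamma>h * h x) (\<gamma>h * ?V ?x1)" by (rule sv_bellman)
      have w: "min (\<gamma>h * h x) (\<gamma>h * W ?x1) \<le> W x" using assms(1) by blast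
      have ih2: "min (\<gamma>h * ?V ?x1) (\<gamma>h * (\<gamma>h ^ n * W (traj f p ?x1 n))) \<le> \<gamma>h * W ?x1"
        using ih \<gamma>h by (auto simp: min_def split: if_splits)
      show "min (?V x) (\<gamma>h ^ Suc n * W (traj f p x (Suc n))) \<le> W x"
        using bel w ih2 by (auto simp: traj_Suc min_def mult.assoc split: if_splits)
    qed
  qed
  show ?thesis
  proof (rule ccontr)
    assume "\<not> ?V x \<le> W x"
    hence lt: "W x < ?V x" by simp
    have "- (\<gamma>h ^ n * c) \<le> W x" for n
    proof -
      have "min (?V x) (\<gamma>h ^ n * W (traj f p x n)) \<le> W x" using P by blast
      hence "\<gamma>h ^ n * W (traj f p x n) \<le> W x" using lt by (simp add: min_def split: if_splits)
      moreover have "\<gamma>h ^ n * (- c) \<le> \<gamma>h ^ n * W (traj f p x n)"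
        using assms(2) \<gamma>h by (intro mult_left_mono) auto
      ultimately show ?thesis by simp
    qed
    moreover have "(\<lambda>n. - (\<gamma>h ^ n * c)) \<longlonglongrightarrow> - (0 * c)"
      using \<gamma>h by (intro tendsto_minus tendsto_mult LIMSEQ_power_zero) auto
    ultimately have "0 \<le> W x" using LIMSEQ_le_const2[of "\<lambda>n. - (\<gamma>h ^ n * c)"] by fastforce
    thus False using lt sv_nonpos[of p x] by simp
  qed
qed

end


definition psum :: "real \<Rightarrow> ('x \<Rightarrow> ('i \<Rightarrow> 'a) \<Rightarrow> real) \<Rightarrow> ('x \<Rightarrow> ('i \<Rightarrow> 'a) \<Rightarrow> 'x)
    \<Rightarrow> ('x \<Rightarrow> 'i \<Rightarrow> 'a) \<Rightarrow> ('x \<Rightarrow> real) \<Rightarrow> 'x \<Rightarrow> nat \<Rightarrow> real" where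
  "psum \<gamma> r f p W x n = (\<Sum>t<n. \<gamma> ^ t * r (traj f p x t) (p (traj f p x t))) + \<gamma> ^ n * W (traj f p x n)"

context
  fixes \<gamma> :: real and r :: "'x::finite \<Rightarrow> ('i \<Rightarrow> 'a) \<Rightarrow> real" and f :: "'x \<Rightarrow> ('i \<Rightarrow> 'a) \<Rightarrow> 'x"
  assumes \<gamma>: "0 < \<gamma>" "\<gamma> < 1"
begin

lemma vf_summable: "summable (\<lambda>t. \<gamma> ^ t * r (traj f p x t) (p (traj f p x t)))"
proof (rule summable_comparison_test)
  let ?R = "Max (range (\<lambda>y. \<bar>r y (p y)\<bar>))"
  show "\<exists>N. \<forall>n\<ge>N. norm (\<gamma> ^ n * r (traj f p x n) (p (traj f p x n))) \<le> \<gamma> ^ n * ?R"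
  proof (intro exI allI impI)
    fix n
    have "\<bar>r (traj f p x n) (p (traj f p x n))\<bar> \<le> ?R" by (rule Max_ge) auto
    thus "norm (\<gamma> ^ n * r (traj f p x n) (p (traj f p x n))) \<le> \<gamma> ^ n * ?R"
      using \<gamma> by (simp add: abs_mult mult_left_mono)
  qed
  show "summable (\<lambda>n. \<gamma> ^ n * ?R)" using \<gamma> by (intro summable_mult2 summable_geometric) simp
qed

lemma vf_bellman: "value_fn \<gamma> r f p x = r x (p x) + \<gamma> * value_fn \<gamma> r f p (f x (p x))"
proof -
  let ?a = "\<lambda>t. \<gamma> ^ t * r (traj f p x t) (p (traj f p x t))"
  let ?b = "\<lambda>t. \<gamma> ^ t * r (traj f p (f x (p x)) t) (p (traj f p (f x (p x)) t))"
  have "(\<Sum>n. ?a (Suc n)) = suminf ?a - ?a 0" by (rule suminf_split_head[OF vf_summable])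
  moreover have "(\<lambda>n. ?a (Suc n)) = (\<lambda>n. \<gamma> * ?b n)" by (simp add: traj_Suc mult.assoc)
  moreover have "(\<Sum>n. \<gamma> * ?b n) = \<gamma> * suminf ?b" by (rule suminf_mult[OF vf_summable])
  ultimately show ?thesis unfolding value_fn_def by simp
qed

lemma psum_Suc: "psum \<gamma> r f p W x (Suc n) = r x (p x) + \<gamma> * psum \<gamma> r f p W (f x (p x)) n"
  unfolding psum_def
  by (simp add: sum.lessThan_Suc_shift traj_Suc sum_distrib_left distrib_left mult_ac del: sum.lessThan_Suc)

lemma psum_lim: "psum \<gamma> r f p W x \<longlonglongrightarrow> value_fn \<gamma> r f p x"
proof -
  have a: "(\<lambda>n. \<Sum>t<n. \<gamma> ^ t * r (traj f p x t) (p (traj f p x t))) \<longlonglongrightarrow> value_fn \<gamma> r f p x"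
    unfolding value_fn_def by (rule summable_LIMSEQ[OF vf_summable])
  let ?B = "Max (range (\<lambda>y. \<bar>W y\<bar>))"
  have b: "(\<lambda>n. \<gamma> ^ n * W (traj f p x n)) \<longlonglongrightarrow> 0"
  proof (rule Lim_null_comparison)
    show "\<forall>\<^sub>F n in sequentially. norm (\<gamma> ^ n * W (traj f p x n)) \<le> \<gamma> ^ n * ?B"
    proof (intro always_eventually allI)
      fix n
      have "\<bar>W (traj f p x n)\<bar> \<le> ?B" by (rule Max_ge) auto
      thus "norm (\<gamma> ^ n * W (traj f p x n)) \<le> \<gamma> ^ n * ?B"
        using \<gamma> by (simp add: abs_mult mult_left_mono)
    qed
    show "(\<lambda>n. \<gamma> ^ n * ?B) \<longlonglongrightarrow> 0"
      using \<gamma> tendsto_mult[OF LIMSEQ_power_zero[of \<gamma>] tendsto_const[of ?B]] by simp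
  qed
  show ?thesis unfolding psum_def using tendsto_add[OF a b] by simp
qed

lemma C_upper:
  assumes "\<forall>y\<in>S. f y (p y) \<in> S \<and> r y (p y) + \<gamma> * W (f y (p y)) \<le> W y" "x \<in> S"
  shows "value_fn \<gamma> r f p x \<le> W x"
proof -
  have "\<forall>x\<in>S. psum \<gamma> r f p W x n \<le> W x" for n
  proof (induction n)
    case 0 thus ?case by (simp add: psum_def)
  next
    case (Suc n)
    show ?case
    proof
      fix x assume x: "x \<in> S"
      have x1: "f x (p x) \<in> S" and bw: "r x (p x) + \<gamma> * W (f x (p x)) \<le> W x" using assms(1) x by auto
      have "psum \<gamma> r f p W (f x (p x)) n \<le> W (f x (p x))" using Suc.IH x1 by blast
      hence "\<gamma> * psum \<gamma> r f p W (f x (p x)) n \<le> \<gamma> * W (f x (p x))" using \<gamma> by simp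
      thus "psum \<gamma> r f p W x (Suc n) \<le> W x" using bw by (simp add: psum_Suc)
    qed
  qed
  thus ?thesis using LIMSEQ_le_const2[OF psum_lim] assms(2) by blast
qed

lemma C_lower:
  assumes "\<forall>y\<in>S. f y (p y) \<in> S \<and> W y \<le> r y (p y) + \<gamma> * W (f y (p y))" "x \<in> S"
  shows "W x \<le> value_fn \<gamma> r f p x"
proof -
  have "\<forall>x\<in>S. W x \<le> psum \<gamma> r f p W x n" for n
  proof (induction n)
    case 0 thus ?case by (simp add: psum_def)
  next
    case (Suc n)
    show ?case
    proof
      fix x assume x: "x \<in> S"
      have x1: "f x (p x) \<in> S" and bw: "W x \<le> r x (p x) + \<gamma> * W (f x (p x))" using assms(1) x by auto
      have "W (f x (p x)) \<le> psum \<gamma> r f p W (f x (p x)) n" using Suc.IH x1 by blast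
      hence "\<gamma> * W (f x (p x)) \<le> \<gamma> * psum \<gamma> r f p W (f x (p x)) n" using \<gamma> by simp
      thus "W x \<le> psum \<gamma> r f p W x (Suc n)" using bw by (simp add: psum_Suc)
    qed
  qed
  thus ?thesis using LIMSEQ_le_const[OF psum_lim] assms(2) by blast
qed

end


lemma image_sub_helper: "(\<And>n. n \<in> A \<Longrightarrow> g n = F (s n) \<and> s n \<in> P) \<Longrightarrow> g ` A \<subseteq> F ` P"
  by blast

lemma safety_conv:
  fixes s :: "nat \<Rightarrow> 'x::finite \<Rightarrow> 'i::finite \<Rightarrow> 'a" and U :: "'i \<Rightarrow> 'a set"
  assumes finU: "\<And>i. finite (U i)" and \<gamma>h: "0 < \<gamma>h" "\<gamma>h < 1"
    and valid: "\<forall>n x i. s n x i \<in> U i"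
    and step: "\<forall>n. \<exists>os. safety_step U \<gamma>h h f os (s n) (s (Suc n))"
  shows "\<exists>M. \<forall>n\<ge>M. s n = s M"
proof -
  let ?Pol = "{p :: 'x \<Rightarrow> 'i \<Rightarrow> 'a. \<forall>x i. p x i \<in> U i}"
  have finP: "finite ?Pol" by (rule finite_pol[OF finU])
  let ?V = "\<lambda>n. safety_value \<gamma>h h f (s n)"
  have Inv1: "\<forall>i w. (\<forall>i. w i \<in> U i) \<longrightarrow> w i \<in> (\<lambda>i w. U i) i w" by simp
  have Inv2: "\<forall>i w v. (\<forall>i. w i \<in> U i) \<longrightarrow> v \<in> (\<lambda>i w. U i) i w \<longrightarrow> (\<forall>j. (w(i:=v)) j \<in> U j)" by simp
  have qmono: "?V n (f x (s n x)) \<le> ?V n (f x (s (Suc n) x)) \<and> (s (Suc n) x \<noteq> s n x \<longrightarrow> ?V n (f x (s n x)) < ?V n (f x (s (Suc n) x)))" for n x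
  proof -
    obtain os where "safety_step U \<gamma>h h f os (s n) (s (Suc n))" using step by blast
    hence su: "seq_update (\<lambda>i w. U i) (\<lambda>u. ?V n (f x u)) os (s n x) (s (Suc n) x)" unfolding safety_step_def by blast
    have "\<forall>i. s n x i \<in> U i" using valid by blast
    from seq_update_mono[where Inv="\<lambda>w. \<forall>i. w i \<in> U i", OF su this Inv1 Inv2]
    show ?thesis by (elim conjE) (intro conjI)
  qed
  have Vmono: "?V n x \<le> ?V (Suc n) x" for n x
  proof (rule L_lower[OF \<gamma>h])
    show "\<forall>y. ?V n y \<le> \<gamma>h * h y \<and> ?V n y \<le> \<gamma>h * ?V n (f y (s (Suc n) y))"
    proof
      fix y
      have b: "?V n y = min (\<gamma>h * h y) (\<gamma>h * ?V n (f y (s n y)))" by (rule sv_bellman[OF \<gamma>h])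
      have "\<gamma>h * ?V n (f y (s n y)) \<le> \<gamma>h * ?V n (f y (s (Suc n) y))" using qmono[of n y] \<gamma>h by simp
      thus "?V n y \<le> \<gamma>h * h y \<and> ?V n y \<le> \<gamma>h * ?V n (f y (s (Suc n) y))" using b by linarith
    qed
  qed
  define \<Phi>1 where "\<Phi>1 n = (\<Sum>x\<in>UNIV. ?V n x)" for n
  have "finite (\<Phi>1 ` {0..})"
  proof (rule finite_subset[OF _ finite_imageI[OF finP, of "\<lambda>q. \<Sum>x\<in>UNIV. safety_value \<gamma>h h f q x"]])
    show "\<Phi>1 ` {0..} \<subseteq> (\<lambda>q. \<Sum>x\<in>UNIV. safety_value \<gamma>h h f q x) ` ?Pol"
      by (rule image_sub_helper[where s=s]) (simp add: \<Phi>1_def valid)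
  qed
  moreover have "\<forall>n\<ge>0. \<Phi>1 n \<le> \<Phi>1 (Suc n)" unfolding \<Phi>1_def by (intro allI impI sum_mono Vmono)
  ultimately obtain n1 where n1: "\<forall>n\<ge>n1. \<Phi>1 n = \<Phi>1 n1" using eventually_const_mono by blast
  have Veq: "?V (Suc n) = ?V n" if "n \<ge> n1" for n
  proof (rule ext)
    fix x
    have "\<Phi>1 (Suc n) = \<Phi>1 n"
    proof -
      have "\<Phi>1 n = \<Phi>1 n1" "\<Phi>1 (Suc n) = \<Phi>1 n1" using n1 that le_SucI by blast+
      thus ?thesis by simp
    qed
    hence eq: "(\<Sum>x\<in>UNIV. ?V (Suc n) x - ?V n x) = 0" unfolding \<Phi>1_def by (simp add: sum_subtractf)
    have nn: "\<And>x. x \<in> UNIV \<Longrightarrow> 0 \<le> ?V (Suc n) x - ?V n x" using Vmono by simp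
    have "\<forall>x\<in>UNIV. ?V (Suc n) x - ?V n x = 0"
      using iffD1[OF sum_nonneg_eq_0_iff[OF finite nn] eq] .
    thus "?V (Suc n) x = ?V n x" by simp
  qed
  have Vc: "?V n = ?V n1" if "n \<ge> n1" for n using that
  proof (induction n rule: dec_induct)
    case base thus ?case by simp
  next
    case (step m) thus ?case using Veq by simp
  qed
  define \<Phi>2 where "\<Phi>2 n = (\<Sum>x\<in>UNIV. ?V n1 (f x (s n x)))" for n
  have "finite (\<Phi>2 ` {n1..})"
  proof (rule finite_subset[OF _ finite_imageI[OF finP, of "\<lambda>q. \<Sum>x\<in>UNIV. ?V n1 (f x (q x))"]])
    show "\<Phi>2 ` {n1..} \<subseteq> (\<lambda>q. \<Sum>x\<in>UNIV. ?V n1 (f x (q x))) ` ?Pol"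
      by (rule image_sub_helper[where s=s]) (simp add: \<Phi>2_def valid)
  qed
  moreover have "\<forall>n\<ge>n1. \<Phi>2 n \<le> \<Phi>2 (Suc n)" unfolding \<Phi>2_def
  proof (intro allI impI sum_mono)
    fix n x assume "n1 \<le> n"
    thus "?V n1 (f x (s n x)) \<le> ?V n1 (f x (s (Suc n) x))" using qmono[of n x] Vc[of n] by simp
  qed
  ultimately obtain n2 where n2: "n2 \<ge> n1" "\<forall>n\<ge>n2. \<Phi>2 n = \<Phi>2 n2" using eventually_const_mono by blast
  have seq: "s (Suc n) = s n" if "n \<ge> n2" for n
  proof (rule ccontr)
    assume "s (Suc n) \<noteq> s n"
    then obtain x where x: "s (Suc n) x \<noteq> s n x" by (meson ext)
    have Vn: "?V n = ?V n1" using Vc[of n] that n2 by simp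
    have "\<Phi>2 n < \<Phi>2 (Suc n)" unfolding \<Phi>2_def
    proof (rule sum_strict_mono_ex1)
      show "\<forall>x\<in>UNIV. ?V n1 (f x (s n x)) \<le> ?V n1 (f x (s (Suc n) x))"
      proof
        fix y show "?V n1 (f y (s n y)) \<le> ?V n1 (f y (s (Suc n) y))" using qmono[of n y] Vn by simp
      qed
      show "\<exists>x\<in>UNIV. ?V n1 (f x (s n x)) < ?V n1 (f x (s (Suc n) x))"
        using qmono[of n x] x Vn by (intro bexI[of _ x]) simp_all
    qed simp
    moreover have "\<Phi>2 (Suc n) = \<Phi>2 n"
    proof -
      have "\<Phi>2 n = \<Phi>2 n2" "\<Phi>2 (Suc n) = \<Phi>2 n2" using n2(2) that le_SucI by blast+
      thus ?thesis by simp
    qed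
    ultimately show False by simp
  qed
  have "s n = s n2" if "n \<ge> n2" for n using that
  proof (induction n rule: dec_induct)
    case base thus ?case by simp
  next
    case (step m) thus ?case using seq[OF step(1)] by simp
  qed
  thus ?thesis by blast
qed


lemma task_conv:
  fixes q :: "nat \<Rightarrow> 'x::finite \<Rightarrow> 'i::finite \<Rightarrow> 'a" and U :: "'i \<Rightarrow> 'a set"
    and Vs :: "'x \<Rightarrow> real"
  assumes finU: "\<And>i. finite (U i)" and \<gamma>: "0 < \<gamma>" "\<gamma> < 1"
    and valid: "\<forall>n x i. q n x i \<in> U i"
    and adm: "\<forall>n\<ge>n0. \<forall>x. 0 \<le> Vs x \<longrightarrow> 0 \<le> Vs (f x (q n x))"
    and step: "\<forall>n\<ge>n0. \<forall>x. 0 \<le> Vs x \<longrightarrow> (\<exists>os. seq_update (\<lambda>i w. {v \<in> U i. 0 \<le> Vs (f x (w(i:=v)))})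
          (\<lambda>u. r x u + \<gamma> * value_fn \<gamma> r f (q n) (f x u)) os (q n x) (q (Suc n) x))"
  shows "\<exists>M\<ge>n0. \<forall>n\<ge>M. \<forall>x. 0 \<le> Vs x \<longrightarrow> q n x = q M x"
proof -
  let ?S = "{y. 0 \<le> Vs y}"
  let ?Pol = "{p :: 'x \<Rightarrow> 'i \<Rightarrow> 'a. \<forall>x i. p x i \<in> U i}"
  have finP: "finite ?Pol" by (rule finite_pol[OF finU])
  let ?V = "\<lambda>n. value_fn \<gamma> r f (q n)"
  let ?Q = "\<lambda>n x u. r x u + \<gamma> * ?V n (f x u)"
  have qmono: "?Q n x (q n x) \<le> ?Q n x (q (Suc n) x) \<and> (q (Suc n) x \<noteq> q n x \<longrightarrow> ?Q n x (q n x) < ?Q n x (q (Suc n) x))"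
    if nn0: "n \<ge> n0" "0 \<le> Vs x" for n x
  proof -
    let ?Inv = "\<lambda>w. (\<forall>i. w i \<in> U i) \<and> 0 \<le> Vs (f x w)"
    let ?C = "\<lambda>i w. {v \<in> U i. 0 \<le> Vs (f x (w(i:=v)))}"
    have Inv1: "\<forall>i w. ?Inv w \<longrightarrow> w i \<in> ?C i w" by simp
    have Inv2: "\<forall>i w v. ?Inv w \<longrightarrow> v \<in> ?C i w \<longrightarrow> ?Inv (w(i:=v))" by simp
    obtain os where su: "seq_update ?C (?Q n x) os (q n x) (q (Suc n) x)" using step nn0 by blast
    have "?Inv (q n x)" using valid adm nn0 by blast
    from seq_update_mono[where Inv="?Inv", OF su this Inv1 Inv2]
    show ?thesis by (elim conjE) (intro conjI)
  qed
  have Vmono: "?V n x \<le> ?V (Suc n) x" if "n \<ge> n0" "x \<in> ?S" for n x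
  proof (rule C_lower[OF \<gamma>, where S="?S"])
    show "x \<in> ?S" by fact
    show "\<forall>y\<in>?S. f y (q (Suc n) y) \<in> ?S \<and> ?V n y \<le> r y (q (Suc n) y) + \<gamma> * ?V n (f y (q (Suc n) y))"
    proof
      fix y assume y: "y \<in> ?S"
      have "f y (q (Suc n) y) \<in> ?S" using adm that y by simp
      moreover have "?V n y = ?Q n y (q n y)" by (rule vf_bellman[OF \<gamma>])
      ultimately show "f y (q (Suc n) y) \<in> ?S \<and> ?V n y \<le> r y (q (Suc n) y) + \<gamma> * ?V n (f y (q (Suc n) y))"
        using qmono[of n y] that y by simp
    qed
  qed
  define \<Phi>1 where "\<Phi>1 n = (\<Sum>x\<in>?S. ?V n x)" for n
  have "finite (\<Phi>1 ` {n0..})"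
  proof (rule finite_subset[OF _ finite_imageI[OF finP, of "\<lambda>p. \<Sum>x\<in>?S. value_fn \<gamma> r f p x"]])
    show "\<Phi>1 ` {n0..} \<subseteq> (\<lambda>p. \<Sum>x\<in>?S. value_fn \<gamma> r f p x) ` ?Pol"
      by (rule image_sub_helper[where s=q]) (simp add: \<Phi>1_def valid)
  qed
  moreover have "\<forall>n\<ge>n0. \<Phi>1 n \<le> \<Phi>1 (Suc n)" unfolding \<Phi>1_def
  proof (intro allI impI sum_mono)
    fix n x assume "n0 \<le> n" "x \<in> ?S" thus "?V n x \<le> ?V (Suc n) x" by (rule Vmono)
  qed
  ultimately obtain n1 where n1: "n1 \<ge> n0" "\<forall>n\<ge>n1. \<Phi>1 n = \<Phi>1 n1" using eventually_const_mono by blast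
  have Veq: "?V (Suc n) x = ?V n x" if "n \<ge> n1" "x \<in> ?S" for n x
  proof -
    have "\<Phi>1 (Suc n) = \<Phi>1 n"
    proof -
      have "\<Phi>1 n = \<Phi>1 n1" "\<Phi>1 (Suc n) = \<Phi>1 n1" using n1(2) that le_SucI by blast+
      thus ?thesis by simp
    qed
    hence eq: "(\<Sum>x\<in>?S. ?V (Suc n) x - ?V n x) = 0" unfolding \<Phi>1_def by (simp add: sum_subtractf)
    have nn: "\<And>x. x \<in> ?S \<Longrightarrow> 0 \<le> ?V (Suc n) x - ?V n x" using Vmono n1 that by simp
    have "\<forall>x\<in>?S. ?V (Suc n) x - ?V n x = 0"
      using iffD1[OF sum_nonneg_eq_0_iff[OF finite nn] eq] .
    thus ?thesis using that by simp
  qed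
  have Vc: "\<forall>x\<in>?S. ?V n x = ?V n1 x" if "n \<ge> n1" for n using that
  proof (induction n rule: dec_induct)
    case base thus ?case by simp
  next
    case (step m) thus ?case using Veq by simp
  qed
  define \<Phi>2 where "\<Phi>2 n = (\<Sum>x\<in>?S. ?Q n1 x (q n x))" for n
  have "finite (\<Phi>2 ` {n1..})"
  proof (rule finite_subset[OF _ finite_imageI[OF finP, of "\<lambda>p. \<Sum>x\<in>?S. ?Q n1 x (p x)"]])
    show "\<Phi>2 ` {n1..} \<subseteq> (\<lambda>p. \<Sum>x\<in>?S. ?Q n1 x (p x)) ` ?Pol"
      by (rule image_sub_helper[where s=q]) (simp add: \<Phi>2_def valid)
  qed
  moreover have Qeq: "?Q n x (q n x) = ?Q n1 x (q n x) \<and> ?Q n x (q (Suc n) x) = ?Q n1 x (q (Suc n) x)"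
    if "n \<ge> n1" "x \<in> ?S" for n x
  proof -
    have "n \<ge> n0" "Suc n \<ge> n0" using that n1 by auto
    hence "f x (q n x) \<in> ?S" "f x (q (Suc n) x) \<in> ?S" using adm that(2) by auto
    thus ?thesis using Vc[OF that(1)] by simp
  qed
  moreover have "\<forall>n\<ge>n1. \<Phi>2 n \<le> \<Phi>2 (Suc n)" unfolding \<Phi>2_def
  proof (intro allI impI sum_mono)
    fix n x assume "n1 \<le> n" "x \<in> ?S"
    thus "?Q n1 x (q n x) \<le> ?Q n1 x (q (Suc n) x)" using qmono[of n x] Qeq[of n x] n1 by simp
  qed
  ultimately obtain n2 where n2: "n2 \<ge> n1" "\<forall>n\<ge>n2. \<Phi>2 n = \<Phi>2 n2" using eventually_const_mono by blast
  have seq: "\<forall>x\<in>?S. q (Suc n) x = q n x" if nge: "n \<ge> n2" for n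
  proof (rule ccontr)
    assume "\<not> (\<forall>x\<in>?S. q (Suc n) x = q n x)"
    then obtain x where xS: "x \<in> ?S" and x: "q (Suc n) x \<noteq> q n x" by blast
    have "\<Phi>2 n < \<Phi>2 (Suc n)" unfolding \<Phi>2_def
    proof (rule sum_strict_mono_ex1)
      have nn: "n \<ge> n1" "n \<ge> n0" using n1(1) n2(1) nge by auto
      show "\<forall>x\<in>?S. ?Q n1 x (q n x) \<le> ?Q n1 x (q (Suc n) x)"
      proof
        fix y assume "y \<in> ?S"
        thus "?Q n1 y (q n y) \<le> ?Q n1 y (q (Suc n) y)" using qmono[OF nn(2), of y] Qeq[OF nn(1), of y] by simp
      qed
      show "\<exists>x\<in>?S. ?Q n1 x (q n x) < ?Q n1 x (q (Suc n) x)"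
        using qmono[OF nn(2), of x] Qeq[OF nn(1), of x] x xS by (intro bexI[of _ x]) simp_all
    qed simp
    moreover have "\<Phi>2 (Suc n) = \<Phi>2 n"
    proof -
      have "\<Phi>2 n = \<Phi>2 n2" "\<Phi>2 (Suc n) = \<Phi>2 n2" using n2(2) nge le_SucI by blast+
      thus ?thesis by simp
    qed
    ultimately show False by simp
  qed
  have allc: "\<forall>x\<in>?S. q n x = q n2 x" if "n \<ge> n2" for n using that
  proof (induction n rule: dec_induct)
    case base thus ?case by simp
  next
    case (step m)
    show ?case
    proof
      fix x assume xs: "x \<in> ?S"
      have "q (Suc m) x = q m x" using seq[OF step(1)] xs by blast
      thus "q (Suc m) x = q n2 x" using step(3) xs by simp
    qed
  qed
  show ?thesis
  proof (intro exI[of _ n2] conjI allI impI)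
    show "n0 \<le> n2" using n1(1) n2(1) by simp
    fix n x assume "n2 \<le> n" "0 \<le> Vs x"
    thus "q n x = q n2 x" using allc by blast
  qed
qed



lemma ifD1: "(if P then A else B) \<Longrightarrow> P \<Longrightarrow> A" by simp
lemma ifD2: "(if P then A else B) \<Longrightarrow> \<not> P \<Longrightarrow> B" by simp

lemma task_update_in:
  assumes "task_update U \<gamma> \<gamma>h h r f ph pold pmid os q" "x \<in> inv_set \<gamma>h h f ph"
  shows "seq_update (\<lambda>i w. {v \<in> U i. 0 \<le> safety_value \<gamma>h h f ph (f x (w(i := v)))})
                 (\<lambda>u. r x u + \<gamma> * value_fn \<gamma> r f pold (f x u)) os (pmid x) (q x)"
  using ifD1[OF spec[OF assms(1)[unfolded task_update_def], of x] assms(2)] .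

lemma task_update_out:
  assumes "task_update U \<gamma> \<gamma>h h r f ph pold pmid os q" "x \<notin> inv_set \<gamma>h h f ph"
  shows "q x = pmid x"
  using ifD2[OF spec[OF assms(1)[unfolded task_update_def], of x] assms(2)] .

theorem theorem2:
  fixes U :: "'i::finite \<Rightarrow> 'a set"
    and f :: "'x::finite \<Rightarrow> ('i \<Rightarrow> 'a) \<Rightarrow> 'x"
    and r :: "'x \<Rightarrow> ('i \<Rightarrow> 'a) \<Rightarrow> real"
    and h :: "'x \<Rightarrow> real"
    and \<gamma> \<gamma>h :: real and K :: nat
    and ph :: "nat \<Rightarrow> 'x \<Rightarrow> 'i \<Rightarrow> 'a" and phs :: "nat \<Rightarrow> nat \<Rightarrow> 'x \<Rightarrow> 'i \<Rightarrow> 'a"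
    and pt :: "nat \<Rightarrow> 'x \<Rightarrow> 'i \<Rightarrow> 'a" and Sc :: "nat \<Rightarrow> 'x set"
    and ordh :: "nat \<Rightarrow> nat \<Rightarrow> 'i list" and ordt :: "nat \<Rightarrow> 'i list"
  assumes finU: "\<And>i. finite (U i)"
    and \<gamma>: "0 < \<gamma>" "\<gamma> < 1" and \<gamma>h: "0 < \<gamma>h" "\<gamma>h < 1"
    and K: "K \<ge> 1"
    and run: "dpi_run U \<gamma> \<gamma>h h r f K ph phs pt Sc ordh ordt"
  shows "\<exists>\<pi>h\<pi> \<pi>s. (\<exists>N. \<forall>k\<ge>N. ph k = \<pi>h\<pi> \<and> (\<forall>j\<le>K. phs k j = \<pi>h\<pi>) \<and> pt k = \<pi>s)
    \<and> (let S = inv_set \<gamma>h h f \<pi>h\<pi> in S \<noteq> {} \<longrightarrow>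
        \<comment> \<open>(a)\<close>
        (\<forall>i \<pi>i. (\<forall>y. \<pi>i y \<in> U i) \<longrightarrow>
           (\<forall>x. safety_value \<gamma>h h f (deviate \<pi>h\<pi> i \<pi>i) x \<le> safety_value \<gamma>h h f \<pi>h\<pi> x))
        \<comment> \<open>(b)\<close>
      \<and> (\<forall>x. x \<notin> S \<longrightarrow> \<pi>s x = \<pi>h\<pi> x)
      \<and> (\<forall>x\<in>S. safety_value \<gamma>h h f \<pi>h\<pi> (f x (\<pi>s x)) \<ge> 0)
        \<comment> \<open>(c)\<close>
      \<and> (\<forall>i \<pi>i. (\<forall>y. \<pi>i y \<in> U i) \<longrightarrow>
           (\<forall>y\<in>S. safety_value \<gamma>h h f \<pi>h\<pi> (f y ((\<pi>s y)(i := \<pi>i y))) \<ge> 0) \<longrightarrow>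
           (\<forall>x\<in>S. value_fn \<gamma> r f (deviate \<pi>s i \<pi>i) x \<le> value_fn \<gamma> r f \<pi>s x))
        \<comment> \<open>(d)\<close>
      \<and> (\<forall>d i \<pi>i. (\<forall>y. \<pi>i y \<in> U i) \<longrightarrow>
           (\<forall>y\<in>S. safety_value \<gamma>h h f \<pi>h\<pi> (f y ((\<pi>s y)(i := \<pi>i y))) \<ge> 0) \<longrightarrow>
           twofold_J \<gamma> \<gamma>h h r f S d (deviate \<pi>s i \<pi>i) \<le> twofold_J \<gamma> \<gamma>h h r f S d \<pi>s))"
proof -
  let ?valid = "\<lambda>p :: 'x \<Rightarrow> 'i \<Rightarrow> 'a. \<forall>x i. p x i \<in> U i"
  have R0: "\<forall>x i. ph 0 x i \<in> U i" "\<forall>x i. pt 0 x i \<in> U i" using run unfolding dpi_run_def by auto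
  have R: "phs k 0 = ph k \<and> ph (Suc k) = phs k K
        \<and> (\<forall>j<K. is_ordering (ordh k j) \<and> safety_step U \<gamma>h h f (ordh k j) (phs k j) (phs k (Suc j)))
        \<and> is_ordering (ordt k)
        \<and> task_update U \<gamma> \<gamma>h h r f (ph (Suc k)) (pt k)
             (\<lambda>x. if x \<in> Sc k then pt k x else ph (Suc k) x) (ordt k) (pt (Suc k))
        \<and> Sc (Suc k) = inv_set \<gamma>h h f (ph (Suc k))" for k
    using run unfolding dpi_run_def by blast
  have R1: "phs k 0 = ph k" for k using R by blast
  have R2: "ph (Suc k) = phs k K" for k using R by blast
  have R3: "j < K \<Longrightarrow> safety_step U \<gamma>h h f (ordh k j) (phs k j) (phs k (Suc j))" for k j using R by blast
  have R3o: "j < K \<Longrightarrow> is_ordering (ordh k j)" for k j using R by blast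
  have R4: "is_ordering (ordt k)" for k using R by blast
  have R5: "task_update U \<gamma> \<gamma>h h r f (ph (Suc k)) (pt k)
             (\<lambda>x. if x \<in> Sc k then pt k x else ph (Suc k) x) (ordt k) (pt (Suc k))" for k using R by blast
  have R6: "Sc (Suc k) = inv_set \<gamma>h h f (ph (Suc k))" for k using R by blast
  have Kpos: "0 < K" using K by simp

  have vstep: "?valid p'" if "?valid p" "safety_step U \<gamma>h h f os p p'" for p p' os
  proof (intro allI)
    fix x i
    have "seq_update (\<lambda>i w. U i) (\<lambda>u. safety_value \<gamma>h h f p (f x u)) os (p x) (p' x)"
      using that(2) unfolding safety_step_def by blast
    from seq_update_valid[OF this, of U] that(1) show "p' x i \<in> U i" by blast
  qed
  have vphs: "?valid (phs k j)" if "?valid (ph k)" "j \<le> K" for k j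
    using that(2)
  proof (induction j)
    case 0 thus ?case using R1 that(1) by simp
  next
    case (Suc j)
    thus ?case using vstep[OF _ R3[of j k]] by simp
  qed
  have vall: "?valid (ph k) \<and> ?valid (pt k)" for k
  proof (induction k)
    case 0 thus ?case using R0 by simp
  next
    case (Suc k)
    have a: "?valid (ph (Suc k))" using R2 vphs[of k K] Suc by simp
    have "?valid (pt (Suc k))"
    proof (intro allI)
      fix x i
      let ?pm = "\<lambda>x. if x \<in> Sc k then pt k x else ph (Suc k) x"
      have pm: "\<forall>i. ?pm x i \<in> U i" using a Suc by simp
      show "pt (Suc k) x i \<in> U i"
      proof (cases "x \<in> inv_set \<gamma>h h f (ph (Suc k))")
        case True
        from seq_update_valid[OF task_update_in[OF R5[of k] True], of U] pm show ?thesis by blast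
      next
        case False
        have "pt (Suc k) x = ?pm x" by (rule task_update_out[OF R5[of k] False])
        thus ?thesis using pm by simp
      qed
    qed
    thus ?case using a by blast
  qed

  define s where "s m = phs (m div K) (m mod K)" for m
  have s_next: "s (Suc m) = phs (m div K) (Suc (m mod K))" for m
  proof (cases "Suc (m mod K) = K")
    case True
    have "Suc m div K = Suc (m div K)" "Suc m mod K = 0" using True Kpos by (auto simp: div_Suc mod_Suc)
    thus ?thesis using True R1 R2 unfolding s_def by simp
  next
    case False
    have "Suc m div K = m div K" "Suc m mod K = Suc (m mod K)" using False Kpos by (auto simp: div_Suc mod_Suc)
    thus ?thesis unfolding s_def by simp
  qed
  have s_step: "\<forall>m. \<exists>os. safety_step U \<gamma>h h f os (s m) (s (Suc m))"
  proof
    fix m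
    have mK: "m mod K < K" using Kpos by simp
    have e: "s m = phs (m div K) (m mod K)" by (simp add: s_def)
    show "\<exists>os. safety_step U \<gamma>h h f os (s m) (s (Suc m))"
      unfolding e s_next using R3[OF mK, of "m div K"] by blast
  qed
  have s_valid: "\<forall>n x i. s n x i \<in> U i"
  proof (intro allI)
    fix n x i
    have "n mod K \<le> K" using Kpos by (simp add: less_imp_le)
    from vphs[OF conjunct1[OF vall[of "n div K"]] this]
    show "s n x i \<in> U i" unfolding s_def by blast
  qed
  obtain M where M: "\<forall>n\<ge>M. s n = s M" using safety_conv[OF finU \<gamma>h s_valid s_step] by blast
  define \<pi>h where "\<pi>h = s M"
  have phs_eq: "phs k j = \<pi>h" if "k \<ge> M" "j \<le> K" for k j
  proof (cases "j < K")
    case True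
    have "(k * K + j) div K = k" "(k * K + j) mod K = j" using True Kpos by simp_all
    hence e1: "phs k j = s (k * K + j)" unfolding s_def by simp
    have "k * K + j \<ge> M"
    proof -
      have "k * 1 \<le> k * K" using Kpos by (intro mult_le_mono2) simp
      hence "k \<le> k * K" by simp
      thus ?thesis using that(1) by linarith
    qed
    from M[rule_format, OF this] show ?thesis using e1 \<pi>h_def by simp
  next
    case False
    hence jK: "j = K" using that(2) by simp
    have "Suc k * K div K = Suc k" "Suc k * K mod K = 0" using Kpos by simp_all
    hence "s (Suc k * K) = ph (Suc k)" unfolding s_def using R1 by simp
    hence e1: "phs k j = s (Suc k * K)" using R2 jK by simp
    have "Suc k * K \<ge> M"
    proof -
      have "Suc k * 1 \<le> Suc k * K" using Kpos by (intro mult_le_mono2) simp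
      hence "Suc k \<le> Suc k * K" by simp
      thus ?thesis using that(1) by linarith
    qed
    from M[rule_format, OF this] show ?thesis using e1 \<pi>h_def by simp
  qed
  have ph_eq: "ph k = \<pi>h" if "k \<ge> M" for k using phs_eq[OF that, of 0] R1 by simp
  have vh: "?valid \<pi>h" using vall[of M] ph_eq by simp

  define S where "S = inv_set \<gamma>h h f \<pi>h"
  define Vs where "Vs = safety_value \<gamma>h h f \<pi>h"
  have S_iff: "y \<in> S \<longleftrightarrow> 0 \<le> Vs y" for y unfolding S_def Vs_def inv_set_def by simp
  have Sc_eq: "Sc k = S" if kM: "k \<ge> Suc M" for k
  proof -
    obtain k' where k': "k = Suc k'" using kM by (cases k) auto
    hence "k' \<ge> M" using kM by simp
    hence "ph (Suc k') = \<pi>h" using ph_eq by simp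
    thus ?thesis using R6[of k'] k' unfolding S_def by simp
  qed
  let ?C = "\<lambda>x i w. {v \<in> U i. 0 \<le> Vs (f x (w(i := v)))}"
  have adm: "0 \<le> Vs (f x (pt (Suc k) x))" if "k \<ge> M" "x \<in> S" for k x
  proof -
    have ph1: "ph (Suc k) = \<pi>h" using ph_eq that by simp
    have "x \<in> inv_set \<gamma>h h f (ph (Suc k))" using that ph1 unfolding S_def by simp
    from task_update_in[OF R5[of k] this]
    have "seq_update (?C x) (\<lambda>u. r x u + \<gamma> * value_fn \<gamma> r f (pt k) (f x u)) (ordt k)
       (if x \<in> Sc k then pt k x else ph (Suc k) x) (pt (Suc k) x)"
      unfolding ph1 Vs_def .
    moreover have "ordt k \<noteq> []" using R4[of k] unfolding is_ordering_def by auto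
    ultimately show ?thesis by (rule seq_update_last) blast
  qed
  have off: "pt (Suc k) x = \<pi>h x" if "k \<ge> Suc M" "x \<notin> S" for k x
  proof -
    have ph1: "ph (Suc k) = \<pi>h" using ph_eq that by simp
    have "x \<notin> inv_set \<gamma>h h f (ph (Suc k))" using that ph1 unfolding S_def by simp
    hence "pt (Suc k) x = (if x \<in> Sc k then pt k x else ph (Suc k) x)" by (rule task_update_out[OF R5[of k]])
    thus ?thesis using Sc_eq[OF that(1)] that(2) ph1 by simp
  qed
  have tstep: "seq_update (?C x) (\<lambda>u. r x u + \<gamma> * value_fn \<gamma> r f (pt k) (f x u)) (ordt k) (pt k x) (pt (Suc k) x)"
    if "k \<ge> Suc M" "x \<in> S" for k x
  proof -
    have ph1: "ph (Suc k) = \<pi>h" using ph_eq that by simp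
    have "x \<in> inv_set \<gamma>h h f (ph (Suc k))" using that ph1 unfolding S_def by simp
    from task_update_in[OF R5[of k] this]
    have "seq_update (?C x) (\<lambda>u. r x u + \<gamma> * value_fn \<gamma> r f (pt k) (f x u)) (ordt k)
        (if x \<in> Sc k then pt k x else ph (Suc k) x) (pt (Suc k) x)"
      unfolding ph1 Vs_def .
    thus ?thesis using Sc_eq[OF that(1)] that(2) by simp
  qed
  have conv2: "\<exists>M2\<ge>Suc (Suc M). \<forall>n\<ge>M2. \<forall>x. 0 \<le> Vs x \<longrightarrow> pt n x = pt M2 x"
  proof (rule task_conv[OF finU \<gamma>])
    show "\<forall>n x i. pt n x i \<in> U i" using vall by blast
    show "\<forall>n\<ge>Suc (Suc M). \<forall>x. 0 \<le> Vs x \<longrightarrow> 0 \<le> Vs (f x (pt n x))"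
    proof (intro allI impI)
      fix n x assume "Suc (Suc M) \<le> n" "0 \<le> Vs x"
      then obtain k where "n = Suc k" "k \<ge> M" by (cases n) auto
      thus "0 \<le> Vs (f x (pt n x))" using adm \<open>0 \<le> Vs x\<close> S_iff by blast
    qed
    show "\<forall>n\<ge>Suc (Suc M). \<forall>x. 0 \<le> Vs x \<longrightarrow> (\<exists>os. seq_update (?C x)
          (\<lambda>u. r x u + \<gamma> * value_fn \<gamma> r f (pt n) (f x u)) os (pt n x) (pt (Suc n) x))"
    proof (intro allI impI)
      fix n x assume "Suc (Suc M) \<le> n" "0 \<le> Vs x"
      thus "\<exists>os. seq_update (?C x) (\<lambda>u. r x u + \<gamma> * value_fn \<gamma> r f (pt n) (f x u)) os (pt n x) (pt (Suc n) x)"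
        using tstep[of n x] S_iff by auto
    qed
  qed
  then obtain M2 where M2: "M2 \<ge> Suc (Suc M)" "\<forall>n\<ge>M2. \<forall>x. 0 \<le> Vs x \<longrightarrow> pt n x = pt M2 x" by blast
  define \<pi>s where "\<pi>s = pt M2"
  have pt_eq: "pt n = \<pi>s" if nM: "n \<ge> M2" for n
  proof
    fix x
    show "pt n x = \<pi>s x"
    proof (cases "x \<in> S")
      case True thus ?thesis using M2(2) nM S_iff \<pi>s_def by blast
    next
      case False
      obtain k where k: "n = Suc k" using nM M2(1) by (cases n) auto
      have k': "k \<ge> Suc M" using k nM M2(1) by simp
      obtain k2 where k2: "M2 = Suc k2" using M2(1) by (cases M2) auto
      have k2': "k2 \<ge> Suc M" using k2 M2(1) by simp
      show ?thesis using off[OF k' False] off[OF k2' False] k k2 \<pi>s_def by simp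
    qed
  qed
  have ps_valid: "?valid \<pi>s" using vall \<pi>s_def by blast
  have offS: "\<pi>s x = \<pi>h x" if "x \<notin> S" for x
  proof -
    obtain k2 where k2: "M2 = Suc k2" "k2 \<ge> Suc M" using M2(1) by (cases M2) auto
    show ?thesis using off[OF k2(2) that] k2 \<pi>s_def by simp
  qed
  have admS: "0 \<le> Vs (f x (\<pi>s x))" if "x \<in> S" for x
  proof -
    obtain k2 where k2: "M2 = Suc k2" "k2 \<ge> Suc M" using M2(1) by (cases M2) auto
    show ?thesis using adm[of k2 x] k2 that \<pi>s_def by simp
  qed

  have maxS: "Vs (f x ((\<pi>h x)(i := v))) \<le> Vs (f x (\<pi>h x))" if "v \<in> U i" for x i v
  proof -
    have st: "safety_step U \<gamma>h h f (ordh M2 0) (phs M2 0) (phs M2 (Suc 0))" using R3 Kpos by blast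
    have e: "phs M2 0 = \<pi>h" "phs M2 (Suc 0) = \<pi>h" using phs_eq M2(1) K by auto
    have su: "seq_update (\<lambda>i w. U i) (\<lambda>u. Vs (f x u)) (ordh M2 0) (\<pi>h x) (\<pi>h x)"
      using spec[OF st[unfolded safety_step_def], of x] unfolding e Vs_def .
    have io: "i \<in> set (ordh M2 0)" using R3o[of 0 M2] Kpos unfolding is_ordering_def by auto
    have "\<forall>i. \<pi>h x i \<in> U i" using vh by blast
    from seq_update_fix[where Inv="\<lambda>w. \<forall>i. w i \<in> U i", OF su this] io that
    show ?thesis by simp
  qed
  have maxT: "r x ((\<pi>s x)(i := v)) + \<gamma> * value_fn \<gamma> r f \<pi>s (f x ((\<pi>s x)(i := v)))
      \<le> r x (\<pi>s x) + \<gamma> * value_fn \<gamma> r f \<pi>s (f x (\<pi>s x))"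
    if "x \<in> S" "v \<in> U i" "0 \<le> Vs (f x ((\<pi>s x)(i := v)))" for x i v
  proof -
    have su0: "seq_update (?C x) (\<lambda>u. r x u + \<gamma> * value_fn \<gamma> r f (pt M2) (f x u)) (ordt M2) (pt M2 x) (pt (Suc M2) x)"
      using tstep[of M2 x] M2(1) that(1) by simp
    have e: "pt (Suc M2) = pt M2" using pt_eq[of "Suc M2"] \<pi>s_def by simp
    have su: "seq_update (?C x) (\<lambda>u. r x u + \<gamma> * value_fn \<gamma> r f \<pi>s (f x u)) (ordt M2) (\<pi>s x) (\<pi>s x)"
      using su0 unfolding e \<pi>s_def .
    have io: "i \<in> set (ordt M2)" using R4[of M2] unfolding is_ordering_def by auto
    have inv: "(\<forall>i. \<pi>s x i \<in> U i) \<and> 0 \<le> Vs (f x (\<pi>s x))" using ps_valid admS that(1) by blast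
    have vC: "v \<in> ?C x i (\<pi>s x)" using that(2,3) by blast
    have I1: "\<forall>i w. (\<forall>i. w i \<in> U i) \<and> 0 \<le> Vs (f x w) \<longrightarrow> w i \<in> ?C x i w" by simp
    have I2: "\<forall>i w v. (\<forall>i. w i \<in> U i) \<and> 0 \<le> Vs (f x w) \<longrightarrow> v \<in> ?C x i w \<longrightarrow>
       (\<forall>j. (w(i := v)) j \<in> U j) \<and> 0 \<le> Vs (f x (w(i := v)))" by simp
    from seq_update_fix[where Inv="\<lambda>w. (\<forall>i. w i \<in> U i) \<and> 0 \<le> Vs (f x w)", OF su inv I1 I2] io vC
    show ?thesis by blast
  qed

  have Vs_bell: "Vs y = min (\<gamma>h * h y) (\<gamma>h * Vs (f y (\<pi>h y)))" for y
    unfolding Vs_def by (rule sv_bellman[OF \<gamma>h])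
  have Vs_np: "Vs y \<le> 0" for y unfolding Vs_def by (rule sv_nonpos[OF \<gamma>h])
  have Vs_lb: "- Max (range (\<lambda>x. \<bar>h x\<bar>)) \<le> Vs y" for y unfolding Vs_def by (rule sv_lb[OF \<gamma>h])

  have partA: "safety_value \<gamma>h h f (deviate \<pi>h i \<pi>i) x \<le> Vs x" if "\<forall>y. \<pi>i y \<in> U i" for i \<pi>i x
  proof (rule L_upper[OF \<gamma>h])
    show "\<forall>y. min (\<gamma>h * h y) (\<gamma>h * Vs (f y (deviate \<pi>h i \<pi>i y))) \<le> Vs y"
    proof
      fix y
      have "Vs (f y ((\<pi>h y)(i := \<pi>i y))) \<le> Vs (f y (\<pi>h y))" using maxS that by blast
      hence "\<gamma>h * Vs (f y ((\<pi>h y)(i := \<pi>i y))) \<le> \<gamma>h * Vs (f y (\<pi>h y))" using \<gamma>h by simp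
      thus "min (\<gamma>h * h y) (\<gamma>h * Vs (f y (deviate \<pi>h i \<pi>i y))) \<le> Vs y"
        using Vs_bell[of y] unfolding deviate_def by linarith
    qed
    show "\<forall>y. - Max (range (\<lambda>x. \<bar>h x\<bar>)) \<le> Vs y" using Vs_lb by blast
  qed
  have partC: "value_fn \<gamma> r f (deviate \<pi>s i \<pi>i) x \<le> value_fn \<gamma> r f \<pi>s x"
    if "\<forall>y. \<pi>i y \<in> U i" "\<forall>y\<in>S. 0 \<le> Vs (f y ((\<pi>s y)(i := \<pi>i y)))" "x \<in> S" for i \<pi>i x
  proof (rule C_upper[OF \<gamma>, where S=S])
    show "x \<in> S" by fact
    show "\<forall>y\<in>S. f y (deviate \<pi>s i \<pi>i y) \<in> S \<and>
        r y (deviate \<pi>s i \<pi>i y) + \<gamma> * value_fn \<gamma> r f \<pi>s (f y (deviate \<pi>s i \<pi>i y)) \<le> value_fn \<gamma> r f \<pi>s y"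
    proof
      fix y assume y: "y \<in> S"
      have d: "deviate \<pi>s i \<pi>i y = (\<pi>s y)(i := \<pi>i y)" by (simp add: deviate_def)
      have "value_fn \<gamma> r f \<pi>s y = r y (\<pi>s y) + \<gamma> * value_fn \<gamma> r f \<pi>s (f y (\<pi>s y))"
        by (rule vf_bellman[OF \<gamma>])
      thus "f y (deviate \<pi>s i \<pi>i y) \<in> S \<and>
        r y (deviate \<pi>s i \<pi>i y) + \<gamma> * value_fn \<gamma> r f \<pi>s (f y (deviate \<pi>s i \<pi>i y)) \<le> value_fn \<gamma> r f \<pi>s y"
        using maxT[OF y, of "\<pi>i y" i] that(1,2) y d S_iff by simp
    qed
  qed
  have partD1: "safety_value \<gamma>h h f (deviate \<pi>s i \<pi>i) x \<le> safety_value \<gamma>h h f \<pi>s x"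
    if "\<forall>y. \<pi>i y \<in> U i" for i \<pi>i x
  proof -
    have "safety_value \<gamma>h h f (deviate \<pi>s i \<pi>i) x \<le> Vs x"
    proof (rule L_upper[OF \<gamma>h])
      show "\<forall>y. min (\<gamma>h * h y) (\<gamma>h * Vs (f y (deviate \<pi>s i \<pi>i y))) \<le> Vs y"
      proof
        fix y
        show "min (\<gamma>h * h y) (\<gamma>h * Vs (f y (deviate \<pi>s i \<pi>i y))) \<le> Vs y"
        proof (cases "y \<in> S")
          case True
          hence "Vs y = 0" using S_iff Vs_np by (meson antisym)
          moreover have "\<gamma>h * Vs (f y (deviate \<pi>s i \<pi>i y)) \<le> 0"
            using Vs_np \<gamma>h by (simp add: mult_nonneg_nonpos)
          ultimately show ?thesis by linarith
        next
          case False
          have d: "deviate \<pi>s i \<pi>i y = (\<pi>h y)(i := \<pi>i y)" using offS[OF False] by (simp add: deviate_def)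
          have "Vs (f y ((\<pi>h y)(i := \<pi>i y))) \<le> Vs (f y (\<pi>h y))" using maxS that by blast
          hence "\<gamma>h * Vs (f y ((\<pi>h y)(i := \<pi>i y))) \<le> \<gamma>h * Vs (f y (\<pi>h y))" using \<gamma>h by simp
          thus ?thesis unfolding d using Vs_bell[of y] by linarith
        qed
      qed
      show "\<forall>y. - Max (range (\<lambda>x. \<bar>h x\<bar>)) \<le> Vs y" using Vs_lb by blast
    qed
    also have "Vs x \<le> safety_value \<gamma>h h f \<pi>s x"
    proof (rule L_lower[OF \<gamma>h])
      show "\<forall>y. Vs y \<le> \<gamma>h * h y \<and> Vs y \<le> \<gamma>h * Vs (f y (\<pi>s y))"
      proof
        fix y
        have a: "Vs y \<le> \<gamma>h * h y" using Vs_bell[of y] by linarith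
        have "Vs y \<le> \<gamma>h * Vs (f y (\<pi>s y))"
        proof (cases "y \<in> S")
          case True
          hence "Vs y = 0" using S_iff Vs_np by (meson antisym)
          moreover have "0 \<le> \<gamma>h * Vs (f y (\<pi>s y))" using admS[OF True] \<gamma>h by simp
          ultimately show ?thesis by simp
        next
          case False
          thus ?thesis unfolding offS[OF False] using Vs_bell[of y] by linarith
        qed
        thus "Vs y \<le> \<gamma>h * h y \<and> Vs y \<le> \<gamma>h * Vs (f y (\<pi>s y))" using a by simp
      qed
    qed
    finally show ?thesis .
  qed
  have partD: "twofold_J \<gamma> \<gamma>h h r f S d (deviate \<pi>s i \<pi>i) \<le> twofold_J \<gamma> \<gamma>h h r f S d \<pi>s"
    if "\<forall>y. \<pi>i y \<in> U i" "\<forall>y\<in>S. 0 \<le> Vs (f y ((\<pi>s y)(i := \<pi>i y)))" for d i \<pi>i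
    unfolding twofold_J_def
  proof (rule integral_mono)
    show "integrable (measure_pmf d) (\<lambda>x0. value_fn \<gamma> r f (deviate \<pi>s i \<pi>i) x0 * indicator S x0 +
        safety_value \<gamma>h h f (deviate \<pi>s i \<pi>i) x0 * indicator (- S) x0)"
      by (rule integrable_measure_pmf_finite) simp
    show "integrable (measure_pmf d) (\<lambda>x0. value_fn \<gamma> r f \<pi>s x0 * indicator S x0 +
        safety_value \<gamma>h h f \<pi>s x0 * indicator (- S) x0)"
      by (rule integrable_measure_pmf_finite) simp
    fix x
    show "value_fn \<gamma> r f (deviate \<pi>s i \<pi>i) x * indicator S x +
        safety_value \<gamma>h h f (deviate \<pi>s i \<pi>i) x * indicator (- S) x
        \<le> value_fn \<gamma> r f \<pi>s x * indicator S x + safety_value \<gamma>h h f \<pi>s x * indicator (- S) x"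
    proof (cases "x \<in> S")
      case True thus ?thesis using partC[OF that True] by simp
    next
      case False thus ?thesis using partD1[OF that(1), of x] by simp
    qed
  qed

  show ?thesis
  proof (rule exI[of _ \<pi>h], rule exI[of _ \<pi>s], rule conjI)
    show "\<exists>N. \<forall>k\<ge>N. ph k = \<pi>h \<and> (\<forall>j\<le>K. phs k j = \<pi>h) \<and> pt k = \<pi>s"
      using ph_eq phs_eq pt_eq M2(1) by (intro exI[of _ M2]) auto
    show "let S = inv_set \<gamma>h h f \<pi>h in S \<noteq> {} \<longrightarrow>
        (\<forall>i \<pi>i. (\<forall>y. \<pi>i y \<in> U i) \<longrightarrow>
           (\<forall>x. safety_value \<gamma>h h f (deviate \<pi>h i \<pi>i) x \<le> safety_value \<gamma>h h f \<pi>h x))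
      \<and> (\<forall>x. x \<notin> S \<longrightarrow> \<pi>s x = \<pi>h x)
      \<and> (\<forall>x\<in>S. safety_value \<gamma>h h f \<pi>h (f x (\<pi>s x)) \<ge> 0)
      \<and> (\<forall>i \<pi>i. (\<forall>y. \<pi>i y \<in> U i) \<longrightarrow>
           (\<forall>y\<in>S. safety_value \<gamma>h h f \<pi>h (f y ((\<pi>s y)(i := \<pi>i y))) \<ge> 0) \<longrightarrow>
           (\<forall>x\<in>S. value_fn \<gamma> r f (deviate \<pi>s i \<pi>i) x \<le> value_fn \<gamma> r f \<pi>s x))
      \<and> (\<forall>d i \<pi>i. (\<forall>y. \<pi>i y \<in> U i) \<longrightarrow>
           (\<forall>y\<in>S. safety_value \<gamma>h h f \<pi>h (f y ((\<pi>s y)(i := \<pi>i y))) \<ge> 0) \<longrightarrow>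
           twofold_J \<gamma> \<gamma>h h r f S d (deviate \<pi>s i \<pi>i) \<le> twofold_J \<gamma> \<gamma>h h r f S d \<pi>s)"
      unfolding Let_def S_def[symmetric] Vs_def[symmetric]
      using partA partC partD offS admS by blast
  qed
qed


end
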